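(* Let $r$ be an odd positive integer and $n=2^{\alpha}p_1^{\alpha_1}p_2^{\alpha_2}\cdots p_s^{\alpha_s}$, where $p_1,\ldots,p_s$ are distinct odd primes each greater than $r$, $\alpha,\alpha_1,\ldots,\alpha_s$ are positive integers, and $2^t p_1^{\gamma}+r$ is composite for all $t\in\{1,\ldots,\alpha\}$ and $\gamma\in\{1,\ldots,\alpha_1\}$. For each such $t,\gamma$ let $q_{t,\gamma}$ be a prime divisor of $2^tp_1^{\gamma}+r$, and let $M$ be the least common multiple of all the $q_{t,\gamma}$. If $p_i\equiv 1\pmod{M}$ for all $i\in\{2,\ldots,s\}$ and $p_1-r\nmid n$, then $n\in G_r$.
   Context: For a positive integer $r$, the $r$-th Schemmel totient function $S_r:\mathbb{N}\to\mathbb{N}_0$ is the multiplicative arithmetic function (so $S_r(1)=1$ and $S_r(ab)=S_r(a)S_r(b)$ for coprime $a,b$) defined on prime powers by $S_r(p^{\alpha})=0$ if $p\le r$ and $S_r(p^\alpha)=p^{\alpha-1}(p-r)$ if $p>r$, for all primes $p$ and positive integers $\alpha$. $G_r$ denotes the set of positive integers not in the range of $S_r$. *)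

theory Defs
  imports "HOL-Computational_Algebra.Primes" "HOL-Number_Theory.Cong"
begin

text \<open>Its domain is the positive integers; the value at 0 is irrelevant (set to 0).\<close>
definition schemmel_totient :: "nat \<Rightarrow> nat \<Rightarrow> nat" where
  "schemmel_totient r n =
     (if n = 0 then 0
      else (\<Prod>p\<in>prime_factors n.
              if p \<le> r then 0 else p ^ (multiplicity p n - 1) * (p - r)))"

definition G :: "nat \<Rightarrow> nat set" where
  "G r = {n. 0 < n \<and> (\<forall>m. 0 < m \<longrightarrow> schemmel_totient r m \<noteq> n)}"

end

theory Submission
  imports Defs
begin

lemma cong_one_prod_pf:
  fixes Q qq :: nat
  assumes "Q > 0" "\<And>g. g \<in> prime_factors Q \<Longrightarrow> [g = 1] (mod qq)"
  shows "[Q = 1] (mod qq)"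
proof -
  have "Q = (\<Prod>g\<in>prime_factors Q. g ^ multiplicity g Q)"
    using prod_prime_factors[of Q] assms(1) by simp
  also have "[\<dots> = (\<Prod>g\<in>prime_factors Q. 1 ^ multiplicity g Q)] (mod qq)"
    by (intro cong_prod cong_pow assms(2))
  finally show ?thesis by simp
qed

lemma prime_pow_dvd_coprime_le:
  fixes pp t k X :: nat
  assumes "prime pp" "pp ^ t dvd pp ^ k * X" "\<not> pp dvd X"
  shows "t \<le> k"
proof -
  have "coprime (pp ^ t) X"
    using assms(1,3) by (simp add: coprime_power_left_iff prime_imp_coprime)
  then have "pp ^ t dvd pp ^ k" using assms(2) coprime_dvd_mult_left_iff by blast
  then show ?thesis using power_dvd_imp_le prime_gt_1_nat assms(1) by blast
qed

lemma decomp: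
  fixes x pp :: nat assumes "x \<noteq> 0" "prime pp"
  obtains y where "x = pp ^ multiplicity pp x * y" "\<not> pp dvd y"
  using multiplicity_decompose'[OF assms(1) _] using assms(2) not_prime_unit by blast

theorem theorem3p2:
  fixes r s \<alpha> n :: nat and p a :: "nat \<Rightarrow> nat" and q :: "nat \<Rightarrow> nat \<Rightarrow> nat"
  assumes r_pos: "0 < r" and r_odd: "odd r"
    and s_pos: "1 \<le> s"
    and p_prime: "\<forall>i\<in>{1..s}. prime (p i)"
    and p_odd: "\<forall>i\<in>{1..s}. odd (p i)"
    and p_gt: "\<forall>i\<in>{1..s}. r < p i"
    and p_inj: "inj_on p {1..s}"
    and alpha_pos: "0 < \<alpha>"
    and a_pos: "\<forall>i\<in>{1..s}. 0 < a i"
    and n_def: "n = 2 ^ \<alpha> * (\<Prod>i\<in>{1..s}. p i ^ a i)"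
    and composite: "\<forall>t\<in>{1..\<alpha>}. \<forall>\<gamma>\<in>{1..a 1}.
                      1 < 2 ^ t * p 1 ^ \<gamma> + r \<and> \<not> prime (2 ^ t * p 1 ^ \<gamma> + r)"
    and q_prime: "\<forall>t\<in>{1..\<alpha>}. \<forall>\<gamma>\<in>{1..a 1}. prime (q t \<gamma>)"
    and q_dvd: "\<forall>t\<in>{1..\<alpha>}. \<forall>\<gamma>\<in>{1..a 1}. q t \<gamma> dvd 2 ^ t * p 1 ^ \<gamma> + r"
    and cong_M: "\<forall>i\<in>{2..s}.
        [p i = 1] (mod (Lcm {q t \<gamma> | t \<gamma>. t \<in> {1..\<alpha>} \<and> \<gamma> \<in> {1..a 1}}))"
    and not_dvd: "\<not> (p 1 - r) dvd n"
  shows "n \<in> G r"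
proof -
  define R where "R = (\<Prod>i\<in>{2..s}. p i ^ a i)"
  have "{1..s} = insert 1 {2..s}" using s_pos by auto
  then have n_eq: "n = 2 ^ \<alpha> * p 1 ^ a 1 * R"
    unfolding n_def R_def by (simp add: mult.assoc)
  have p1: "prime (p 1)" "odd (p 1)" "r < p 1" using p_prime p_odd p_gt s_pos by auto
  have R_fac: "\<exists>i\<in>{2..s}. g = p i" if "prime g" "g dvd R" for g
  proof -
    from that obtain i where i: "i \<in> {2..s}" "g dvd p i ^ a i"
      unfolding R_def using prime_dvd_prod_iff[of "{2..s}" g] by auto
    then have "g dvd p i" using that(1) prime_dvd_power by blast
    moreover have "prime (p i)" using p_prime i(1) by auto
    ultimately have "g = p i" using primes_dvd_imp_eq that(1) by blast
    then show ?thesis using i by auto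
  qed
  have two_R: "\<not> 2 dvd R"
  proof
    assume "2 dvd R"
    then obtain i where i: "i \<in> {2..s}" "2 = p i" using R_fac[of 2] by auto
    then have "i \<in> {1..s}" by auto
    then have "odd (p i)" using p_odd by blast
    then show False using i by simp
  qed
  have p1_R: "\<not> p 1 dvd R"
  proof
    assume "p 1 dvd R"
    then obtain i where i: "i \<in> {2..s}" "p 1 = p i" using R_fac[of "p 1"] p1 by auto
    have "1 \<in> {1..s}" "i \<in> {1..s}" using s_pos i(1) by auto
    then have "1 = i" using p_inj i(2) unfolding inj_on_def by blast
    then show False using i by auto
  qed
  have R_pos: "R > 0" using two_R by (cases "R = 0") auto
  have n_pos: "n > 0" using n_eq R_pos p1 by (simp add: prime_gt_0_nat)
  show ?thesis unfolding G_def
  proof (intro CollectI conjI allI impI notI)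
    show "0 < n" by (rule n_pos)
  next
    fix m assume m0: "0 < m" and Sm: "schemmel_totient r m = n"
    define F where "F = (\<lambda>g. if g \<le> r then 0 else g ^ (multiplicity g m - 1) * (g - r))"
    have n_prod: "n = (\<Prod>g\<in>prime_factors m. F g)"
      using Sm m0 unfolding schemmel_totient_def F_def by simp
    have "p 1 dvd n" using n_eq a_pos s_pos by auto
    then obtain f where f: "f \<in> prime_factors m" "p 1 dvd F f"
      using n_prod prime_dvd_prod_iff[of "prime_factors m" "p 1" F] p1 by auto
    have fprime: "prime f" using f by auto
    have Ff_dvd: "F f dvd n" using n_prod f(1) by (simp add: dvd_prodI)
    have fr: "r < f"
    proof (rule ccontr)
      assume "\<not> r < f"
      then have "F f = 0" unfolding F_def by auto
      then show False using Ff_dvd n_pos by auto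
    qed
    have Dn: "f - r dvd n" using Ff_dvd fr unfolding F_def by (auto intro: dvd_trans)
    have "p 1 dvd f ^ (multiplicity f m - 1) * (f - r)" using f fr unfolding F_def by auto
    then have "p 1 dvd f ^ (multiplicity f m - 1) \<or> p 1 dvd f - r"
      using p1 prime_dvd_mult_iff by blast
    moreover have "\<not> p 1 dvd f ^ (multiplicity f m - 1)"
    proof
      assume "p 1 dvd f ^ (multiplicity f m - 1)"
      then have "p 1 dvd f" using p1 prime_dvd_power by blast
      then have "p 1 = f" using p1 fprime primes_dvd_imp_eq by blast
      then show False using Dn not_dvd by simp
    qed
    ultimately have p1D: "p 1 dvd f - r" by blast
    define D where "D = f - r"
    have D0: "D > 0" using fr D_def by simp
    have f2: "f \<noteq> 2"
    proof
      assume "f = 2"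
      then have "D = 1" using fr r_pos D_def by simp
      then show False using p1D D_def p1 by (simp add: prime_gt_1_nat)
    qed
    have "f > 2" using f2 prime_ge_2_nat[OF fprime] by simp
    then have "odd f" using fprime prime_odd_nat by simp
    then have evD: "2 dvd D" using r_odd fr unfolding D_def by (simp add: even_diff_nat)
    define t where "t = multiplicity 2 D"
    obtain P where P: "D = 2 ^ t * P" "\<not> 2 dvd P"
      using decomp[of D 2] D0 unfolding t_def by auto
    have P0: "P > 0" using P D0 by (cases "P = 0") auto
    have "p 1 dvd P"
    proof -
      have "coprime (p 1) (2 ^ t)" using p1 by (simp add: coprime_power_right_iff)
      moreover have "p 1 dvd 2 ^ t * P" using p1D P(1) D_def by metis
      ultimately show ?thesis using coprime_dvd_mult_right_iff by blast
    qed
    define \<gamma> where "\<gamma> = multiplicity (p 1) P"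
    obtain Q where Q: "P = p 1 ^ \<gamma> * Q" "\<not> p 1 dvd Q"
      using decomp[of P "p 1"] P0 p1 unfolding \<gamma>_def by auto
    have Q0: "Q > 0" using Q P0 by (cases "Q = 0") auto
    have Q2: "\<not> 2 dvd Q" using Q P by auto
    have Deq: "D = 2 ^ t * p 1 ^ \<gamma> * Q" using P Q by (simp add: mult.assoc)
    have t1: "t \<ge> 1" using evD P by (cases t) auto
    have g1: "\<gamma> \<ge> 1" using \<open>p 1 dvd P\<close> Q by (cases \<gamma>) auto
    have Dn': "D dvd n" using Dn D_def by simp
    have tal: "t \<le> \<alpha>"
    proof (rule prime_pow_dvd_coprime_le[of 2 t \<alpha> "p 1 ^ a 1 * R"])
      show "prime (2::nat)" by simp
      show "2 ^ t dvd 2 ^ \<alpha> * (p 1 ^ a 1 * R)"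
      proof -
        have "2 ^ t dvd D" using Deq by (simp add: mult.assoc)
        then have "2 ^ t dvd n" using Dn' by (rule dvd_trans)
        then show ?thesis using n_eq by (simp add: mult.assoc)
      qed
      show "\<not> 2 dvd p 1 ^ a 1 * R" using p1 two_R by (simp add: prime_dvd_mult_iff)
    qed
    have gal: "\<gamma> \<le> a 1"
    proof (rule prime_pow_dvd_coprime_le[of "p 1" \<gamma> "a 1" "2 ^ \<alpha> * R"])
      show "prime (p 1)" by (rule p1)
      have "p 1 ^ \<gamma> dvd D" using Deq by simp
      then show "p 1 ^ \<gamma> dvd p 1 ^ a 1 * (2 ^ \<alpha> * R)"
      proof -
        have "p 1 ^ \<gamma> dvd n" using \<open>p 1 ^ \<gamma> dvd D\<close> Dn' by (rule dvd_trans)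
        moreover have "n = p 1 ^ a 1 * (2 ^ \<alpha> * R)" using n_eq by simp
        ultimately show ?thesis by simp
      qed
      have "\<not> p 1 dvd 2 ^ \<alpha>"
      proof
        assume "p 1 dvd 2 ^ \<alpha>"
        then have "p 1 dvd 2" using p1 prime_dvd_power by blast
        then have "p 1 = 2" using p1(1) two_is_prime_nat primes_dvd_imp_eq by blast
        then show False using p1(2) by simp
      qed
      then show "\<not> p 1 dvd 2 ^ \<alpha> * R" using p1 p1_R by (simp add: prime_dvd_mult_iff)
    qed
    have QR: "Q dvd R"
    proof -
      have c2: "coprime Q (2 ^ \<alpha>)" using Q2 by (simp add: coprime_power_right_iff prime_imp_coprime coprime_commute)
      have "coprime (p 1) Q" using Q(2) p1(1) by (simp add: prime_imp_coprime)
      then have cp: "coprime Q (p 1 ^ a 1)" by (simp add: coprime_power_right_iff coprime_commute)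
      have "Q dvd D" using Deq by simp
      then have "Q dvd n" using Dn' by (rule dvd_trans)
      then have "Q dvd (2 ^ \<alpha> * p 1 ^ a 1) * R" using n_eq by simp
      moreover have "coprime Q (2 ^ \<alpha> * p 1 ^ a 1)" using c2 cp by simp
      ultimately show ?thesis using coprime_dvd_mult_right_iff by blast
    qed
    define qq where "qq = q t \<gamma>"
    have tin: "t \<in> {1..\<alpha>}" "\<gamma> \<in> {1..a 1}" using t1 tal g1 gal by auto
    have qq_prime: "prime qq" using q_prime tin qq_def by auto
    have qq_dvd: "qq dvd 2 ^ t * p 1 ^ \<gamma> + r" using q_dvd tin qq_def by auto
    have qqM: "qq dvd Lcm {q t \<gamma> | t \<gamma>. t \<in> {1..\<alpha>} \<and> \<gamma> \<in> {1..a 1}}"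
      using tin qq_def by (intro dvd_Lcm) auto
    have Qc: "[Q = 1] (mod qq)"
    proof (rule cong_one_prod_pf[OF Q0])
      fix g assume "g \<in> prime_factors Q"
      then have "prime g" "g dvd R" using QR by (auto intro: dvd_trans)
      then obtain i where "i \<in> {2..s}" "g = p i" using R_fac by blast
      then show "[g = 1] (mod qq)" using cong_M qqM cong_dvd_modulus_nat by blast
    qed
    have feq: "f = 2 ^ t * p 1 ^ \<gamma> * Q + r" using Deq D_def fr by simp
    have "[2 ^ t * p 1 ^ \<gamma> * Q + r = 2 ^ t * p 1 ^ \<gamma> * 1 + r] (mod qq)"
      by (intro cong_add cong_mult Qc cong_refl)
    then have "[f = 2 ^ t * p 1 ^ \<gamma> + r] (mod qq)" using feq by simp
    then have "qq dvd f" using qq_dvd cong_dvd_iff by blast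
    then have qqf: "qq = f" using qq_prime fprime primes_dvd_imp_eq by blast
    have "1 < 2 ^ t * p 1 ^ \<gamma> + r" "\<not> prime (2 ^ t * p 1 ^ \<gamma> + r)" using composite tin by auto
    then have "qq < 2 ^ t * p 1 ^ \<gamma> + r" using qq_dvd qq_prime
    proof -
      have "qq \<le> 2 ^ t * p 1 ^ \<gamma> + r" using \<open>1 < 2 ^ t * p 1 ^ \<gamma> + r\<close> by (intro dvd_imp_le[OF qq_dvd]) linarith
      moreover have "qq \<noteq> 2 ^ t * p 1 ^ \<gamma> + r" using qq_prime \<open>\<not> prime (2 ^ t * p 1 ^ \<gamma> + r)\<close> by auto
      ultimately show ?thesis by simp
    qed
    moreover have "2 ^ t * p 1 ^ \<gamma> + r \<le> f" using feq Q0 by simp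
    ultimately show False using qqf by simp
  qed
qed

end
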